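(* Let $\langle-,-\rangle$ be a cyclic form on $C$. Then $\langle\mu(v_1,\dots,v_n),\mu(w_1,\dots,w_l)\rangle=0$ unless $\mathrm{Span}\{v_1,\dots,v_n,w_1,\dots,w_l\}=V$.
   Context: $k$ is a field of characteristic zero, $V$ a $k$-vector space of dimension $m\ge1$ in degree $0$, $A=\mathrm{Sym}(V)$, and $C=A^{\textup{!`}}$ the exterior coalgebra on $sV$ with elements $\mu(v_1,\dots,v_n)=sv_1\wedge\cdots\wedge sv_n$ (the vectors in each such expression taken linearly independent; $\mu()=e$ is the counit element), and coproduct $\triangle\mu(v_1,\dots,v_n)=\sum_{p=0}^n\sum_{\sigma\in Sh_{p,n-p}}\mathrm{sgn}(\sigma)\mu(v_{\sigma(1)},\dots,v_{\sigma(p)})\otimes\mu(v_{\sigma(p+1)},\dots,v_{\sigma(n)})$. A symmetric bilinear form of degree $-d$ on $C$ is $\langle-,-\rangle:C\otimes C\to k[d]$ with $\langle a,b\rangle=(-1)^{|a||b|}\langle b,a\rangle$; it is cyclic if $\sum\langle a,b^2\rangle b^1=\sum\langle a^1,b\rangle a^2$ for all $a,b$, with $\triangle(a)=\sum a^1\otimes a^2$, $\triangle(b)=\sum b^1\otimes b^2$. *)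

theory Defs
  imports "HOL-Analysis.Analysis"
begin

text \<open>Model: V = 'k^'n with 'n a finite linearly ordered index type (m = CARD('n) \<ge> 1).
  The exterior coalgebra C on sV is modelled by coefficient functions on the basis
  e_S = s e_{s_1} \<and> ... \<and> s e_{s_p} (S = {s_1 < ... < s_p} \<subseteq> 'n), i.e. C = 'n set \<Rightarrow> 'k;
  C \<otimes> C = ('n set \<times> 'n set) \<Rightarrow> 'k.  The degree of e_S is card S.\<close>

type_synonym ('k, 'n) coalg = "'n set \<Rightarrow> 'k"

definition basis_el :: "'n set \<Rightarrow> ('k::field, 'n) coalg" where
  "basis_el S = (\<lambda>T. if T = S then 1 else 0)"

text \<open>sign of the (p, n-p)-shuffle putting the elements of U first, then those of W\<close>
definition shuf_sign :: "'n::linorder set \<Rightarrow> 'n set \<Rightarrow> 'k::field" where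
  "shuf_sign U W = (- 1) ^ card {(u, w). u \<in> U \<and> w \<in> W \<and> w < u}"

definition coprod :: "('k::field, 'n::{finite,linorder}) coalg \<Rightarrow> ('n set \<times> 'n set \<Rightarrow> 'k)" where
  "coprod a = (\<lambda>(U, W). if U \<inter> W = {} then shuf_sign U W * a (U \<union> W) else 0)"

text \<open>mu(v_1,...,v_n) = s v_1 \<and> ... \<and> s v_n expanded in the basis (coefficients are minors)\<close>
definition mu :: "('k::field ^ 'n::{finite,linorder}) list \<Rightarrow> ('k, 'n) coalg" where
  "mu vs = (\<lambda>S. if card S = length vs then
      (\<Sum>\<sigma> | \<sigma> permutes {..<length vs}.
          of_int (sign \<sigma>) * (\<Prod>j<length vs. (vs ! j) $ (sorted_list_of_set S ! \<sigma> j)))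
    else 0)"

definition homogeneous :: "nat \<Rightarrow> ('k::field, 'n) coalg \<Rightarrow> bool" where
  "homogeneous p a \<longleftrightarrow> (\<forall>S. a S \<noteq> 0 \<longrightarrow> card S = p)"

definition bilinear_form :: "(('k::field, 'n::finite) coalg \<Rightarrow> ('k, 'n) coalg \<Rightarrow> 'k) \<Rightarrow> bool" where
  "bilinear_form f \<longleftrightarrow>
     (\<forall>a a' b. f (\<lambda>S. a S + a' S) b = f a b + f a' b) \<and>
     (\<forall>c a b. f (\<lambda>S. c * a S) b = c * f a b) \<and>
     (\<forall>a b b'. f a (\<lambda>S. b S + b' S) = f a b + f a b') \<and>
     (\<forall>c a b. f a (\<lambda>S. c * b S) = c * f a b)"

text \<open>symmetric bilinear form of degree -d: nonzero only on pairs of total degree d,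
  graded symmetric with sign (-1)^(|a||b|)\<close>
definition symmetric_form :: "int \<Rightarrow> (('k::field, 'n::finite) coalg \<Rightarrow> ('k, 'n) coalg \<Rightarrow> 'k) \<Rightarrow> bool" where
  "symmetric_form d f \<longleftrightarrow> bilinear_form f \<and>
     (\<forall>p q a b. homogeneous p a \<longrightarrow> homogeneous q b \<longrightarrow> int p + int q \<noteq> d \<longrightarrow> f a b = 0) \<and>
     (\<forall>p q a b. homogeneous p a \<longrightarrow> homogeneous q b \<longrightarrow> f a b = (- 1) ^ (p * q) * f b a)"

text \<open>cyclicity: sum <a, b2> b1 = sum <a1, b> a2, Sweedler sums written in the basis e_U \<otimes> e_W\<close>
definition cyclic_form :: "(('k::field, 'n::{finite,linorder}) coalg \<Rightarrow> ('k, 'n) coalg \<Rightarrow> 'k) \<Rightarrow> bool" where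
  "cyclic_form f \<longleftrightarrow> (\<forall>a b.
     (\<lambda>X. \<Sum>W\<in>UNIV. coprod b (X, W) * f a (basis_el W)) =
     (\<lambda>X. \<Sum>U\<in>UNIV. coprod a (U, X) * f (basis_el U) b))"

end

theory Submission
  imports Defs
begin

definition D :: "('k::field ^ 'n::finite) list \<Rightarrow> (('k ^ 'n) \<Rightarrow> 'k) list \<Rightarrow> 'k" where
  "D xs cs = (\<Sum>\<sigma> | \<sigma> permutes {..<length xs}.
      of_int (sign \<sigma>) * (\<Prod>k<length xs. (cs ! k) (xs ! \<sigma> k)))"

lemma D_perm:
  fixes xs :: "('k::field ^ 'n::finite) list"
  assumes tau: "\<tau> permutes {..<length xs}"
  shows "D xs (map (\<lambda>k. cs ! \<tau> k) [0..<length xs]) = of_int (sign \<tau>) * D xs cs"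
proof -
  let ?n = "length xs"
  have pt: "permutation \<tau>" using tau permutation_permutes by blast
  have "D xs (map (\<lambda>k. cs ! \<tau> k) [0..<?n]) =
     (\<Sum>\<sigma> | \<sigma> permutes {..<?n}. of_int (sign \<sigma>) * (\<Prod>k<?n. (cs ! \<tau> k) (xs ! \<sigma> k)))"
    unfolding D_def by (intro sum.cong refl arg_cong2[where f="(*)"] prod.cong) auto
  also have "\<dots> = (\<Sum>\<sigma> | \<sigma> permutes {..<?n}. of_int (sign \<sigma>) * (\<Prod>k<?n. (cs ! k) (xs ! \<sigma> (inv \<tau> k))))"
  proof (intro sum.cong refl arg_cong2[where f="(*)"])
    fix \<sigma>
    have b: "bij_betw \<tau> {..<?n} {..<?n}" using tau permutes_imp_bij by blast
    show "(\<Prod>k<?n. (cs ! \<tau> k) (xs ! \<sigma> k)) = (\<Prod>k<?n. (cs ! k) (xs ! \<sigma> (inv \<tau> k)))"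
      using prod.reindex_bij_betw[OF b, of "\<lambda>k. (cs ! k) (xs ! \<sigma> (inv \<tau> k))"]
      using permutes_inverses(2)[OF tau] by simp
  qed
  also have "\<dots> = (\<Sum>\<sigma> | \<sigma> permutes {..<?n}. of_int (sign (\<sigma> \<circ> \<tau>)) * (\<Prod>k<?n. (cs ! k) (xs ! (\<sigma> \<circ> \<tau>) (inv \<tau> k))))"
    by (rule sum_permutations_compose_right[OF tau])
  also have "\<dots> = (\<Sum>\<sigma> | \<sigma> permutes {..<?n}. of_int (sign \<tau>) * (of_int (sign \<sigma>) * (\<Prod>k<?n. (cs ! k) (xs ! \<sigma> k))))"
  proof (intro sum.cong refl)
    fix \<sigma> assume "\<sigma> \<in> {\<sigma>. \<sigma> permutes {..<?n}}"
    then have ps: "permutation \<sigma>" using permutation_permutes by blast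
    show "of_int (sign (\<sigma> \<circ> \<tau>)) * (\<Prod>k<?n. (cs ! k) (xs ! (\<sigma> \<circ> \<tau>) (inv \<tau> k))) =
       of_int (sign \<tau>) * (of_int (sign \<sigma>) * (\<Prod>k<?n. (cs ! k) (xs ! \<sigma> k)))"
      using sign_compose[OF ps pt] permutes_inverses(1)[OF tau] by simp
  qed
  also have "\<dots> = of_int (sign \<tau>) * D xs cs" unfolding D_def by (simp add: sum_distrib_left)
  finally show ?thesis .
qed

lemma D_swap:
  fixes xs :: "('k::field ^ 'n::finite) list"
  assumes "length (A @ [a, b] @ B) = length xs"
  shows "D xs (A @ [a, b] @ B) = - D xs (A @ [b, a] @ B)"
proof -
  let ?n = "length xs" and ?k = "length A"
  let ?t = "Transposition.transpose ?k (Suc ?k)"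
  have tau: "?t permutes {..<?n}" using assms by (intro permutes_swap_id) auto
  have "map (\<lambda>k. (A @ [b, a] @ B) ! ?t k) [0..<?n] = A @ [a, b] @ B"
  proof (intro nth_equalityI)
    fix i assume i: "i < length (map (\<lambda>k. (A @ [b, a] @ B) ! ?t k) [0..<?n])"
    consider "i < length A" | "i = length A" | "i = Suc (length A)" | "i > Suc (length A)" by linarith
    then show "map (\<lambda>k. (A @ [b, a] @ B) ! ?t k) [0..<?n] ! i = (A @ [a, b] @ B) ! i"
      using assms i by cases (auto simp: nth_append transpose_apply_other nth_Cons')
  qed (use assms in simp)
  then have "D xs (A @ [a, b] @ B) = of_int (sign ?t) * D xs (A @ [b, a] @ B)"
    using D_perm[OF tau, of "A @ [b, a] @ B"] by simp
  then show ?thesis by (simp add: sign_swap_id)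
qed

lemma D_move_end:
  fixes xs :: "('k::field ^ 'n::finite) list"
  assumes "length (A @ [c] @ B) = length xs"
  shows "D xs (A @ [c] @ B) = (-1) ^ length B * D xs (A @ B @ [c])"
  using assms
proof (induction B arbitrary: A)
  case Nil then show ?case by simp
next
  case (Cons b B)
  have "D xs (A @ [c] @ b # B) = - D xs ((A @ [b]) @ [c] @ B)"
    using D_swap[of A c b B xs] Cons.prems by simp
  also have "\<dots> = - ((-1) ^ length B * D xs ((A @ [b]) @ B @ [c]))"
    using Cons.IH[of "A @ [b]"] Cons.prems by simp
  finally show ?case by simp
qed

lemma D_rep_end:
  fixes xs :: "('k::field_char_0 ^ 'n::finite) list"
  assumes "length (L @ [c]) = length xs" and "c \<in> set L"
  shows "D xs (L @ [c]) = 0"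
proof -
  obtain A B where L: "L = A @ [c] @ B" using assms(2) by (metis append_Cons append_Nil split_list)
  have "D xs (A @ [c] @ (B @ [c])) = (-1) ^ length (B @ [c]) * D xs (A @ (B @ [c]) @ [c])"
    by (rule D_move_end) (use assms L in simp)
  moreover have "D xs ((A @ B) @ [c, c] @ []) = - D xs ((A @ B) @ [c, c] @ [])"
    by (rule D_swap) (use assms L in simp)
  ultimately show ?thesis using L by simp
qed


lemma D_lin_end:
  fixes xs :: "('k::field ^ 'n::finite) list"
  assumes "length (L @ [\<phi>]) = length xs"
  shows "D xs (L @ [\<lambda>v. \<Sum>i\<in>I. c i * g i v]) = (\<Sum>i\<in>I. c i * D xs (L @ [g i]))"
proof -
  obtain m where m: "length xs = Suc m" "length L = m" using assms by auto
  have pe: "\<And>h \<sigma>. (\<Prod>k<length xs. ((L @ [h]) ! k) (xs ! \<sigma> k)) = (\<Prod>k<m. (L ! k) (xs ! \<sigma> k)) * h (xs ! \<sigma> m)"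
    using m by (simp add: nth_append)
  show ?thesis unfolding D_def pe
    by (simp add: sum_distrib_left sum_distrib_right mult_ac sum.swap[where A=I])
qed

lemma D_zero_end:
  fixes xs :: "('k::field ^ 'n::finite) list"
  assumes "length (L @ [\<phi>]) = length xs" and "\<And>x. x \<in> set xs \<Longrightarrow> \<phi> x = 0"
  shows "D xs (L @ [\<phi>]) = 0"
proof -
  obtain m where m: "length xs = Suc m" "length L = m" using assms by auto
  have "\<And>\<sigma>. \<sigma> permutes {..<length xs} \<Longrightarrow> (\<Prod>k<length xs. ((L @ [\<phi>]) ! k) (xs ! \<sigma> k)) = 0"
  proof -
    fix \<sigma> assume s: "\<sigma> permutes {..<length xs}"
    have "\<sigma> m < length xs" using s m permutes_in_image by fastforce
    then have "\<phi> (xs ! \<sigma> m) = 0" using assms(2) nth_mem by blast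
    then show "(\<Prod>k<length xs. ((L @ [\<phi>]) ! k) (xs ! \<sigma> k)) = 0" using m by (simp add: nth_append)
  qed
  then show ?thesis unfolding D_def by (intro sum.neutral ballI) (simp del: prod_zero_iff)
qed

lemma D_expand_end:
  fixes xs :: "('k::field ^ 'n::finite) list"
  assumes "length L = length xs" and "\<And>x. x \<in> set xs \<Longrightarrow> \<phi> x = 0"
  shows "D (xs @ [u]) (L @ [\<phi>]) = \<phi> u * D xs L"
proof -
  let ?m = "length xs"
  define F where "F = (\<lambda>\<sigma>. of_int (sign \<sigma>) * (\<Prod>k<Suc ?m. ((L @ [\<phi>]) ! k) ((xs @ [u]) ! \<sigma> k)))"
  have "D (xs @ [u]) (L @ [\<phi>]) = sum F {p. p permutes insert ?m {..<?m}}"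
    unfolding D_def F_def by (simp add: lessThan_Suc)
  also have "\<dots> = (\<Sum>b\<in>insert ?m {..<?m}. \<Sum>q | q permutes {..<?m}. F (Transposition.transpose ?m b \<circ> q))"
    by (rule sum_over_permutations_insert) auto
  also have "\<dots> = (\<Sum>q | q permutes {..<?m}. F q)"
  proof -
    have "(\<Sum>q | q permutes {..<?m}. F (Transposition.transpose ?m b \<circ> q)) = 0" if b: "b < ?m" for b
    proof (intro sum.neutral ballI)
      fix q assume "q \<in> {q. q permutes {..<?m}}"
      then have "q ?m = ?m" by (simp add: permutes_def)
      then have "(Transposition.transpose ?m b \<circ> q) ?m = b" by simp
      moreover have "\<phi> (xs ! b) = 0" using b assms(2) nth_mem by blast
      ultimately show "F (Transposition.transpose ?m b \<circ> q) = 0"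
        unfolding F_def using b assms(1) by (simp add: nth_append)
    qed
    then show ?thesis by simp
  qed
  also have "\<dots> = (\<Sum>q | q permutes {..<?m}. \<phi> u * (of_int (sign q) * (\<Prod>k<?m. (L ! k) (xs ! q k))))"
  proof (intro sum.cong refl)
    fix q assume "q \<in> {q. q permutes {..<?m}}"
    then have q: "q permutes {..<?m}" by simp
    then have qm: "q ?m = ?m" by (simp add: permutes_def)
    have "\<And>k. k < ?m \<Longrightarrow> q k < ?m" using q permutes_in_image by fastforce
    then have "(\<Prod>k<?m. ((L @ [\<phi>]) ! k) ((xs @ [u]) ! q k)) = (\<Prod>k<?m. (L ! k) (xs ! q k))"
      using assms(1) by (intro prod.cong) (auto simp: nth_append)
    then show "F q = \<phi> u * (of_int (sign q) * (\<Prod>k<?m. (L ! k) (xs ! q k)))"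
      unfolding F_def using qm assms(1) by (simp add: nth_append mult_ac)
  qed
  also have "\<dots> = \<phi> u * D xs L" unfolding D_def by (simp add: sum_distrib_left)
  finally show ?thesis .
qed


definition coord :: "'n \<Rightarrow> ('k ^ 'n) \<Rightarrow> 'k" where "coord i = (\<lambda>v. v $ i)"

lemma mu_D: "mu vs S = (if card S = length vs then D vs (map coord (sorted_list_of_set S)) else 0)"
proof (cases "card S = length vs")
  case True
  let ?n = "length vs" and ?L = "sorted_list_of_set S"
  have lL: "length ?L = ?n" using True by simp
  have "mu vs S = (\<Sum>\<sigma> | \<sigma> permutes {..<?n}. of_int (sign \<sigma>) * (\<Prod>j<?n. (vs ! j) $ (?L ! \<sigma> j)))"
    using True unfolding mu_def by simp
  also have "\<dots> = (\<Sum>\<sigma> | \<sigma> permutes {..<?n}. of_int (sign \<sigma>) * (\<Prod>k<?n. (vs ! inv \<sigma> k) $ (?L ! k)))"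
  proof (intro sum.cong refl arg_cong2[where f="(*)"])
    fix \<sigma> assume "\<sigma> \<in> {\<sigma>. \<sigma> permutes {..<?n}}"
    then have s: "\<sigma> permutes {..<?n}" by simp
    have b: "bij_betw \<sigma> {..<?n} {..<?n}" using s permutes_imp_bij by blast
    show "(\<Prod>j<?n. (vs ! j) $ (?L ! \<sigma> j)) = (\<Prod>k<?n. (vs ! inv \<sigma> k) $ (?L ! k))"
      using prod.reindex_bij_betw[OF b, of "\<lambda>k. (vs ! inv \<sigma> k) $ (?L ! k)"]
      using permutes_inverses(2)[OF s] by simp
  qed
  also have "\<dots> = (\<Sum>\<sigma> | \<sigma> permutes {..<?n}. of_int (sign (inv \<sigma>)) * (\<Prod>k<?n. (vs ! inv (inv \<sigma>) k) $ (?L ! k)))"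
    by (rule sum_permutations_inverse)
  also have "\<dots> = D vs (map coord ?L)"
    unfolding D_def
  proof (intro sum.cong refl)
    fix \<sigma> assume "\<sigma> \<in> {\<sigma>. \<sigma> permutes {..<?n}}"
    then have s: "\<sigma> permutes {..<?n}" by simp
    then have "permutation \<sigma>" using permutation_permutes by blast
    moreover have "inv (inv \<sigma>) = \<sigma>" using s by (simp add: permutes_inv_inv)
    ultimately show "of_int (sign (inv \<sigma>)) * (\<Prod>k<?n. (vs ! inv (inv \<sigma>) k) $ (?L ! k)) =
        of_int (sign \<sigma>) * (\<Prod>k<?n. (map coord ?L ! k) (vs ! \<sigma> k))"
      using lL by (simp add: sign_inverse coord_def)
  qed
  finally show ?thesis using True by simp
qed (simp add: mu_def)

lemma sorted_split:
  fixes W :: "'n::linorder set"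
  assumes "finite W" "i \<notin> W"
  shows "sorted_list_of_set (insert i W) = sorted_list_of_set {w\<in>W. w < i} @ [i] @ sorted_list_of_set {w\<in>W. i < w}"
    and "sorted_list_of_set W = sorted_list_of_set {w\<in>W. w < i} @ sorted_list_of_set {w\<in>W. i < w}"
proof -
  let ?A = "sorted_list_of_set {w\<in>W. w < i}" and ?B = "sorted_list_of_set {w\<in>W. i < w}"
  have fA: "finite {w\<in>W. w < i}" "finite {w\<in>W. i < w}" using assms by auto
  have sA: "sorted_wrt (<) ?A" "sorted_wrt (<) ?B" by (simp_all add: strict_sorted_list_of_set)
  have setA: "set ?A = {w\<in>W. w < i}" "set ?B = {w\<in>W. i < w}" using fA by simp_all
  have "sorted_wrt (<) (?A @ [i] @ ?B)" using sA setA by (auto simp: sorted_wrt_append)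
  moreover have "set (?A @ [i] @ ?B) = insert i W" using setA assms by auto
  ultimately show "sorted_list_of_set (insert i W) = ?A @ [i] @ ?B"
    by (metis assms(1) finite_insert strict_sorted_equal strict_sorted_list_of_set set_sorted_list_of_set)
  have "sorted_wrt (<) (?A @ ?B)" using sA setA by (auto simp: sorted_wrt_append)
  moreover have "set (?A @ ?B) = W" using setA assms by (auto simp: not_less_iff_gr_or_eq)
  ultimately show "sorted_list_of_set W = ?A @ ?B"
    by (metis assms(1) strict_sorted_equal strict_sorted_list_of_set set_sorted_list_of_set)
qed


lemma card_split: "card {w\<in>W. w < i} + card {w\<in>W. i < w} = card W" if "i \<notin> (W::'n::{finite,linorder} set)"
proof -
  have "W = {w\<in>W. w < i} \<union> {w\<in>W. i < w}" using that by (auto simp: not_less_iff_gr_or_eq)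
  then have "card W = card ({w\<in>W. w < i} \<union> {w\<in>W. i < w})" by simp
  also have "\<dots> = card {w\<in>W. w < i} + card {w\<in>W. i < w}" by (rule card_Un_disjoint) auto
  finally show ?thesis by simp
qed

lemma mu_insert:
  fixes xs :: "('k::field ^ 'n::{finite,linorder}) list"
  assumes "i \<notin> W" "card (insert i W) = length xs"
  shows "mu xs (insert i W) = (-1) ^ card {w\<in>W. i < w} * D xs (map coord (sorted_list_of_set W) @ [coord i])"
proof -
  let ?A = "sorted_list_of_set {w\<in>W. w < i}" and ?B = "sorted_list_of_set {w\<in>W. i < w}"
  have fW: "finite W" by simp
  have "mu xs (insert i W) = D xs (map coord ?A @ [coord i] @ map coord ?B)"
    using assms sorted_split(1)[OF fW assms(1)] by (simp add: mu_D)
  also have "\<dots> = (-1) ^ card {w\<in>W. i < w} * D xs (map coord ?A @ map coord ?B @ [coord i])"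
  proof -
    have "card (insert i W) = Suc (card W)" using assms(1) by simp
    then have "length (map coord ?A @ [coord i] @ map coord ?B) = length xs"
      using assms(2) card_split[OF assms(1)] by simp
    from D_move_end[OF this] show ?thesis by simp
  qed
  also have "\<dots> = (-1) ^ card {w\<in>W. i < w} * D xs (map coord (sorted_list_of_set W) @ [coord i])"
    using sorted_split(2)[OF fW assms(1)] by simp
  finally show ?thesis .
qed

lemma D_rep_coord:
  fixes xs :: "('k::field_char_0 ^ 'n::{finite,linorder}) list"
  assumes "i \<in> W" "card W + 1 = length xs"
  shows "D xs (map coord (sorted_list_of_set W) @ [coord i]) = 0"
  by (rule D_rep_end) (use assms in auto)

lemma card_pairs1: "card {(u, w). u = i \<and> w \<in> W \<and> w < u} = card {w\<in>W. w < (i::'n::{finite,linorder})}"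
proof -
  have "{(u, w). u = i \<and> w \<in> W \<and> w < u} = (\<lambda>w. (i, w)) ` {w\<in>W. w < i}" by auto
  then show ?thesis by (simp add: card_image inj_on_def)
qed

lemma card_pairs2: "card {(u, w). u \<in> U \<and> w = i \<and> w < u} = card {u\<in>U. (i::'n::{finite,linorder}) < u}"
proof -
  have "{(u, w). u \<in> U \<and> w = i \<and> w < u} = (\<lambda>u. (u, i)) ` {u\<in>U. i < u}" by auto
  then show ?thesis by (simp add: card_image inj_on_def)
qed

lemma K1:
  fixes ws :: "('k::field_char_0 ^ 'n::{finite,linorder}) list"
  assumes "\<And>x. x \<in> set ws \<Longrightarrow> (\<Sum>i\<in>UNIV. c i * x $ i) = 0"
  shows "(\<Sum>i\<in>UNIV. c i * coprod (mu ws) ({i}, W)) = 0"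
proof (cases "card W + 1 = length ws")
  case False
  have "coprod (mu ws) ({i}, W) = 0" for i
    using False by (auto simp: coprod_def mu_def)
  then show ?thesis by simp
next
  case True
  let ?L = "map coord (sorted_list_of_set W)"
  have t: "c i * coprod (mu ws) ({i}, W) = (-1) ^ card W * (c i * D ws (?L @ [coord i]))" for i
  proof (cases "i \<in> W")
    case True
    then show ?thesis using D_rep_coord[OF True, of ws] \<open>card W + 1 = length ws\<close> by (simp add: coprod_def)
  next
    case False
    have "coprod (mu ws) ({i}, W) = (-1) ^ card {w\<in>W. w < i} * ((-1) ^ card {w\<in>W. i < w} * D ws (?L @ [coord i]))"
      using False \<open>card W + 1 = length ws\<close> by (simp add: coprod_def shuf_sign_def card_pairs1 mu_insert)
    also have "\<dots> = (-1) ^ card W * D ws (?L @ [coord i])"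
      using card_split[OF False] by (metis (no_types, lifting) mult.assoc power_add)
    finally show ?thesis by simp
  qed
  have "(\<Sum>i\<in>UNIV. c i * D ws (?L @ [coord i])) = D ws (?L @ [\<lambda>v. \<Sum>i\<in>UNIV. c i * coord i v])"
    by (rule D_lin_end[symmetric]) (use True in simp)
  also have "\<dots> = 0"
    by (rule D_zero_end) (use True assms in \<open>simp_all add: coord_def\<close>)
  finally show ?thesis by (simp add: t sum_distrib_left[symmetric])
qed

lemma K2:
  fixes vs :: "('k::field_char_0 ^ 'n::{finite,linorder}) list"
  assumes "\<And>x. x \<in> set vs \<Longrightarrow> (\<Sum>i\<in>UNIV. c i * x $ i) = 0"
  shows "(\<Sum>i\<in>UNIV. c i * coprod (mu (vs @ [u])) (U, {i})) = (\<Sum>i\<in>UNIV. c i * u $ i) * mu vs U"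
proof (cases "card U = length vs")
  case False
  have "coprod (mu (vs @ [u])) (U, {i}) = 0" for i
    using False by (auto simp: coprod_def mu_def)
  then show ?thesis using False by (simp add: mu_def)
next
  case True
  let ?L = "map coord (sorted_list_of_set U)"
  have t: "c i * coprod (mu (vs @ [u])) (U, {i}) = c i * D (vs @ [u]) (?L @ [coord i])" for i
  proof (cases "i \<in> U")
    case True
    then show ?thesis using D_rep_coord[OF True, of "vs @ [u]"] \<open>card U = length vs\<close> by (simp add: coprod_def)
  next
    case False
    have "coprod (mu (vs @ [u])) (U, {i}) = (-1) ^ card {w\<in>U. i < w} * ((-1) ^ card {w\<in>U. i < w} * D (vs @ [u]) (?L @ [coord i]))"
      using False \<open>card U = length vs\<close> by (simp add: coprod_def shuf_sign_def card_pairs2 mu_insert Un_commute)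
    also have "\<dots> = D (vs @ [u]) (?L @ [coord i])"
      by (simp flip: mult.assoc power_add) 
    finally show ?thesis by simp
  qed
  have "(\<Sum>i\<in>UNIV. c i * D (vs @ [u]) (?L @ [coord i])) = D (vs @ [u]) (?L @ [\<lambda>v. \<Sum>i\<in>UNIV. c i * coord i v])"
    by (rule D_lin_end[symmetric]) (use True in simp)
  also have "\<dots> = (\<Sum>i\<in>UNIV. c i * u $ i) * D vs ?L"
    by (subst D_expand_end) (use True assms in \<open>simp_all add: coord_def\<close>)
  finally show ?thesis using True by (simp add: t mu_D)
qed


lemma exists_functional:
  fixes X :: "('k::field ^ 'n::finite) set"
  assumes "vec.span X \<noteq> UNIV"
  obtains c u where "\<And>x. x \<in> X \<Longrightarrow> (\<Sum>i\<in>UNIV. c i * x $ i) = 0" and "(\<Sum>i\<in>UNIV. c i * u $ i) = 1"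
proof -
  obtain u where u: "u \<notin> vec.span X" using assms by blast
  obtain B where B: "B \<subseteq> vec.span X" "vec.independent B" "vec.span X \<subseteq> vec.span B"
    using vec.maximal_independent_subset[of "vec.span X"] by blast
  have "vec.span B \<subseteq> vec.span X" using B(1) vec.span_minimal vec.subspace_span by blast
  then have uB: "u \<notin> vec.span B" using u by blast
  have ind: "vec.independent (insert u B)" using vec.independent_insertI[OF uB B(2)] .
  obtain j :: 'n where True by blast
  obtain g where g: "Vector_Spaces.linear (*s) (*s) g"
    "\<forall>x\<in>insert u B. g x = (if x = u then axis j (1::'k) else 0)"
    using vec.linear_independent_extend[OF ind, where f="\<lambda>x. if x = u then axis j (1::'k) else (0::'k^'n)"] by blast
  define c where "c i = g (axis i 1) $ j" for i
  have comp: "(\<Sum>i\<in>UNIV. c i * x $ i) = g x $ j" for x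
    unfolding c_def using linear_componentwise[OF g(1), of x j] by (simp add: mult.commute)
  have "g x = 0" if "x \<in> X" for x
  proof -
    have "x \<in> vec.span B" using that B(3) vec.span_superset by blast
    moreover have "\<And>y. y \<in> B \<Longrightarrow> g y = 0" using g(2) uB vec.span_superset by fastforce
    ultimately show ?thesis using vec.linear_eq_0_on_span[OF g(1)] by blast
  qed
  moreover have "g u = axis j 1" using g(2) by simp
  ultimately show ?thesis using that[of c u] comp by (simp add: axis_def)
qed


lemma f_sum_left:
  assumes bf: "bilinear_form f" and fin: "finite A"
  shows "f (\<lambda>S. \<Sum>U\<in>A. g U S) b = (\<Sum>U\<in>A. f (g U) b)"
  using fin
proof (induction A rule: finite_induct)
  case empty
  have sc: "\<And>c a b. f (\<lambda>S. c * a S) b = c * f a b" using bf unfolding bilinear_form_def by blast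
  show ?case using sc[of 0 "\<lambda>_. 0" b] by simp
next
  case (insert x F)
  have "f (\<lambda>S. \<Sum>U\<in>insert x F. g U S) b = f (\<lambda>S. g x S + (\<Sum>U\<in>F. g U S)) b"
    using insert by simp
  also have "\<dots> = f (g x) b + f (\<lambda>S. \<Sum>U\<in>F. g U S) b"
  proof -
    have ad: "\<And>a a' b. f (\<lambda>S. a S + a' S) b = f a b + f a' b" using bf unfolding bilinear_form_def by blast
    show ?thesis using ad[of "g x" "\<lambda>S. \<Sum>U\<in>F. g U S" b] by simp
  qed
  finally show ?case using insert by simp
qed

lemma expand_left:
  fixes f :: "('k::field, 'n::finite) coalg \<Rightarrow> ('k, 'n) coalg \<Rightarrow> 'k"
  assumes bf: "bilinear_form f"
  shows "f a b = (\<Sum>U\<in>UNIV. a U * f (basis_el U) b)"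
proof -
  have a: "a = (\<lambda>S. \<Sum>U\<in>UNIV. a U * basis_el U S)"
  proof (rule ext)
    fix S
    have "(\<Sum>U\<in>UNIV. a U * basis_el U S) = (\<Sum>U\<in>UNIV. if S = U then a U else 0)"
      by (rule sum.cong) (auto simp: basis_el_def)
    then show "a S = (\<Sum>U\<in>UNIV. a U * basis_el U S)" by simp
  qed
  have "f a b = f (\<lambda>S. \<Sum>U\<in>UNIV. (\<lambda>S. a U * basis_el U S) S) b" by (subst a) simp
  also have "\<dots> = (\<Sum>U\<in>UNIV. f (\<lambda>S. a U * basis_el U S) b)" by (rule f_sum_left[OF bf]) simp
  also have "\<dots> = (\<Sum>U\<in>UNIV. a U * f (basis_el U) b)"
    using bf unfolding bilinear_form_def by simp
  finally show ?thesis .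
qed

theorem corollary9p3:
  fixes f :: "('k::field_char_0, 'n::{finite,linorder}) coalg \<Rightarrow> ('k, 'n) coalg \<Rightarrow> 'k"
    and d :: int
    and vs ws :: "('k ^ 'n::{finite,linorder}) list"
  assumes "symmetric_form d f"
    and "cyclic_form f"
    and "distinct vs" and "vec.independent (set vs)"
    and "distinct ws" and "vec.independent (set ws)"
    and "vec.span (set vs \<union> set ws) \<noteq> UNIV"
  shows "f (mu vs) (mu ws) = 0"
proof -
  have bf: "bilinear_form f" using assms(1) unfolding symmetric_form_def by blast
  obtain c u where c: "\<And>x. x \<in> set vs \<union> set ws \<Longrightarrow> (\<Sum>i\<in>UNIV. c i * x $ i) = 0"
    and cu: "(\<Sum>i\<in>UNIV. c i * u $ i) = 1"
    using exists_functional[OF assms(7)] by metis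
  let ?a = "mu (vs @ [u])" and ?b = "mu ws"
  have cyc: "(\<Sum>W\<in>UNIV. coprod ?b (X, W) * f ?a (basis_el W)) = (\<Sum>U\<in>UNIV. coprod ?a (U, X) * f (basis_el U) ?b)" for X
  proof -
    have "(\<lambda>X. \<Sum>W\<in>UNIV. coprod ?b (X, W) * f ?a (basis_el W)) = (\<lambda>X. \<Sum>U\<in>UNIV. coprod ?a (U, X) * f (basis_el U) ?b)"
      using assms(2)[unfolded cyclic_form_def, rule_format, of "mu ws" "mu (vs @ [u])"] .
    then show ?thesis by (rule fun_cong)
  qed
  have "0 = (\<Sum>W\<in>UNIV. (\<Sum>i\<in>UNIV. c i * coprod ?b ({i}, W)) * f ?a (basis_el W))"
  proof -
    have "\<And>x. x \<in> set ws \<Longrightarrow> (\<Sum>i\<in>UNIV. c i * x $ i) = 0" using c by blast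
    then have "\<And>W. (\<Sum>i\<in>UNIV. c i * coprod ?b ({i}, W)) = 0" by (rule K1)
    then show ?thesis by simp
  qed
  also have "\<dots> = (\<Sum>W\<in>UNIV. \<Sum>i\<in>UNIV. c i * (coprod ?b ({i}, W) * f ?a (basis_el W)))"
    by (simp only: sum_distrib_right mult.assoc)
  also have "\<dots> = (\<Sum>i\<in>UNIV. \<Sum>W\<in>UNIV. c i * (coprod ?b ({i}, W) * f ?a (basis_el W)))"
    by (rule sum.swap)
  also have "\<dots> = (\<Sum>i\<in>UNIV. c i * (\<Sum>W\<in>UNIV. coprod ?b ({i}, W) * f ?a (basis_el W)))"
    by (simp only: sum_distrib_left)
  also have "\<dots> = (\<Sum>i\<in>UNIV. c i * (\<Sum>U\<in>UNIV. coprod ?a (U, {i}) * f (basis_el U) ?b))"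
    by (simp add: cyc)
  also have "\<dots> = (\<Sum>i\<in>UNIV. \<Sum>U\<in>UNIV. c i * (coprod ?a (U, {i}) * f (basis_el U) ?b))"
    by (simp only: sum_distrib_left)
  also have "\<dots> = (\<Sum>U\<in>UNIV. \<Sum>i\<in>UNIV. c i * (coprod ?a (U, {i}) * f (basis_el U) ?b))"
    by (rule sum.swap)
  also have "\<dots> = (\<Sum>U\<in>UNIV. (\<Sum>i\<in>UNIV. c i * coprod ?a (U, {i})) * f (basis_el U) ?b)"
    by (simp only: sum_distrib_right mult.assoc)
  also have "\<dots> = (\<Sum>U\<in>UNIV. mu vs U * f (basis_el U) ?b)"
  proof -
    have "\<And>x. x \<in> set vs \<Longrightarrow> (\<Sum>i\<in>UNIV. c i * x $ i) = 0" using c by blast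
    then have "\<And>U. (\<Sum>i\<in>UNIV. c i * coprod ?a (U, {i})) = (\<Sum>i\<in>UNIV. c i * u $ i) * mu vs U" by (rule K2)
    then show ?thesis using cu by simp
  qed
  also have "\<dots> = f (mu vs) ?b" by (rule expand_left[OF bf, symmetric])
  finally show ?thesis by simp
qed

end
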